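(* Let $(G,\sigma)$, $(G',\sigma')$, $(H,\pi)$, $(H',\pi')$ be signed graphs such that $(G,\sigma)$ admits a homomorphism to $(G',\sigma')$ and $(H,\pi)$ admits a homomorphism to $(H',\pi')$. Then $(G,\sigma)\,\square\,(H,\pi)$ admits a homomorphism to $(G',\sigma')\,\square\,(H',\pi')$.
   Context: A signed graph $(G,\sigma)$ is a simple loopless undirected graph $G$ with a signature $\sigma:E(G)\to\{+1,-1\}$. Switching a vertex $v$ negates the sign of every edge incident to $v$; two signatures of $G$ are equivalent if one is obtained from the other by switching a set of vertices. A homomorphism of $(G,\sigma)$ to $(H,\pi)$ is a graph homomorphism $\varphi:G\to H$ for which there is a signature $\sigma'$ equivalent to $\sigma$ with $\pi(\varphi(u)\varphi(v))=\sigma'(uv)$ for every edge $uv$ of $G$. The Cartesian product $(G,\sigma)\,\square\,(H,\pi)$ is the signed graph with vertex set $V(G)\times V(H)$ in which $(u_1,v_1)(u_2,v_2)$ is an edge of sign $s$ if and only if either $u_1=u_2$ and $v_1v_2$ is an edge of $H$ with $\pi(v_1v_2)=s$, or $v_1=v_2$ and $u_1u_2$ is an edge of $G$ with $\sigma(u_1u_2)=s$. *)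

theory Defs
  imports Main
begin

type_synonym 'a sgraph = "'a set \<times> 'a set set \<times> ('a set \<Rightarrow> int)"

definition sverts :: "'a sgraph \<Rightarrow> 'a set" where "sverts G = fst G"
definition sedges :: "'a sgraph \<Rightarrow> 'a set set" where "sedges G = fst (snd G)"
definition ssig :: "'a sgraph \<Rightarrow> 'a set \<Rightarrow> int" where "ssig G = snd (snd G)"

definition signed_graph :: "'a sgraph \<Rightarrow> bool" where
  "signed_graph G \<longleftrightarrow>
     (\<forall>e\<in>sedges G. \<exists>u v. u \<in> sverts G \<and> v \<in> sverts G \<and> u \<noteq> v \<and> e = {u, v}) \<and>
     (\<forall>e\<in>sedges G. ssig G e \<in> {1, -1})"

text \<open>Switching a set X of vertices: an edge changes sign once for each endpoint in X,
  i.e. its sign is negated iff exactly one endpoint lies in X.\<close>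
definition switch :: "'a set \<Rightarrow> ('a set \<Rightarrow> int) \<Rightarrow> 'a set \<Rightarrow> int" where
  "switch X sigma e = (if card (e \<inter> X) = 1 then - sigma e else sigma e)"

definition sig_equiv :: "'a set \<Rightarrow> 'a set set \<Rightarrow> ('a set \<Rightarrow> int) \<Rightarrow> ('a set \<Rightarrow> int) \<Rightarrow> bool" where
  "sig_equiv V E sigma sigma' \<longleftrightarrow>
     (\<exists>X \<subseteq> V. \<forall>e\<in>E. sigma' e = switch X sigma e)"

definition is_sg_hom :: "('a \<Rightarrow> 'b) \<Rightarrow> 'a sgraph \<Rightarrow> 'b sgraph \<Rightarrow> bool" where
  "is_sg_hom f G H \<longleftrightarrow>
     f ` sverts G \<subseteq> sverts H \<and>
     (\<forall>u v. {u, v} \<in> sedges G \<longrightarrow> {f u, f v} \<in> sedges H) \<and>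
     (\<exists>sigma'. sig_equiv (sverts G) (sedges G) (ssig G) sigma' \<and>
        (\<forall>u v. {u, v} \<in> sedges G \<longrightarrow> ssig H {f u, f v} = sigma' {u, v}))"

definition sg_hom_exists :: "'a sgraph \<Rightarrow> 'b sgraph \<Rightarrow> bool" where
  "sg_hom_exists G H \<longleftrightarrow> (\<exists>f. is_sg_hom f G H)"

text \<open>Cartesian product. An edge {(u,v1),(u,v2)} (first coordinate constant) takes the
  sign of {v1,v2} in H; an edge {(u1,v),(u2,v)} takes the sign of {u1,u2} in G.\<close>
definition sg_prod :: "'a sgraph \<Rightarrow> 'b sgraph \<Rightarrow> ('a \<times> 'b) sgraph" where
  "sg_prod G H =
    (sverts G \<times> sverts H,
     {e. \<exists>u v1 v2. u \<in> sverts G \<and> {v1, v2} \<in> sedges H \<and> e = {(u, v1), (u, v2)}} \<union>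
     {e. \<exists>v u1 u2. v \<in> sverts H \<and> {u1, u2} \<in> sedges G \<and> e = {(u1, v), (u2, v)}},
     (\<lambda>e. if card (fst ` e) = 1 then ssig H (snd ` e) else ssig G (fst ` e)))"

end

theory Submission
  imports Defs
begin

lemma card_pair_inter1:
  assumes "x \<noteq> y"
  shows "(card ({x, y} \<inter> S) = 1) \<longleftrightarrow> ((x \<in> S) \<noteq> (y \<in> S))"
  using assms by (cases "x \<in> S"; cases "y \<in> S"; auto)

lemma sg_pair_ne:
  assumes "signed_graph G" "{u, v} \<in> sedges G"
  shows "u \<noteq> v \<and> u \<in> sverts G \<and> v \<in> sverts G"
proof -
  obtain x y where "x \<in> sverts G" "y \<in> sverts G" "x \<noteq> y" "{u, v} = {x, y}"
    using assms unfolding signed_graph_def by blast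
  then show ?thesis by (auto simp: doubleton_eq_iff)
qed

lemma sedges_prod:
  "sedges (sg_prod G H) =
     {e. \<exists>u v1 v2. u \<in> sverts G \<and> {v1, v2} \<in> sedges H \<and> e = {(u, v1), (u, v2)}} \<union>
     {e. \<exists>v u1 u2. v \<in> sverts H \<and> {u1, u2} \<in> sedges G \<and> e = {(u1, v), (u2, v)}}"
  by (simp add: sg_prod_def sedges_def)

lemma sverts_prod: "sverts (sg_prod G H) = sverts G \<times> sverts H"
  by (simp add: sg_prod_def sverts_def)

lemma ssig_prod: "ssig (sg_prod G H) e =
   (if card (fst ` e) = 1 then ssig H (snd ` e) else ssig G (fst ` e))"
  by (simp add: sg_prod_def ssig_def)

theorem theorem4p2:
  fixes G :: "'a sgraph" and G' :: "'b sgraph" and H :: "'c sgraph" and H' :: "'d sgraph"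
  assumes "signed_graph G" and "signed_graph G'" and "signed_graph H" and "signed_graph H'"
    and "sg_hom_exists G G'" and "sg_hom_exists H H'"
  shows "sg_hom_exists (sg_prod G H) (sg_prod G' H')"
proof -
  obtain f sG X where fV: "f ` sverts G \<subseteq> sverts G'"
    and fE: "\<And>u v. {u, v} \<in> sedges G \<Longrightarrow> {f u, f v} \<in> sedges G'"
    and X: "X \<subseteq> sverts G" "\<And>e. e \<in> sedges G \<Longrightarrow> sG e = switch X (ssig G) e"
    and fS: "\<And>u v. {u, v} \<in> sedges G \<Longrightarrow> ssig G' {f u, f v} = sG {u, v}"
    using assms(5) unfolding sg_hom_exists_def is_sg_hom_def sig_equiv_def by blast
  obtain g sH Y where gV: "g ` sverts H \<subseteq> sverts H'"
    and gE: "\<And>u v. {u, v} \<in> sedges H \<Longrightarrow> {g u, g v} \<in> sedges H'"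
    and Y: "Y \<subseteq> sverts H" "\<And>e. e \<in> sedges H \<Longrightarrow> sH e = switch Y (ssig H) e"
    and gS: "\<And>u v. {u, v} \<in> sedges H \<Longrightarrow> ssig H' {g u, g v} = sH {u, v}"
    using assms(6) unfolding sg_hom_exists_def is_sg_hom_def sig_equiv_def by blast
  define F where "F = (\<lambda>(a, b). (f a, g b))"
  define Z where "Z = {(u, v). u \<in> sverts G \<and> v \<in> sverts H \<and> ((u \<in> X) \<noteq> (v \<in> Y))}"
  have key: "F ` e \<in> sedges (sg_prod G' H') \<and>
      ssig (sg_prod G' H') (F ` e) = switch Z (ssig (sg_prod G H)) e"
    if e: "e \<in> sedges (sg_prod G H)" for e
  proof -
    from e consider
      (A) u v1 v2 where "u \<in> sverts G" "{v1, v2} \<in> sedges H" "e = {(u, v1), (u, v2)}"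
    | (B) v u1 u2 where "v \<in> sverts H" "{u1, u2} \<in> sedges G" "e = {(u1, v), (u2, v)}"
      unfolding sedges_prod by blast
    then show ?thesis
    proof cases
      case A
      have ne: "v1 \<noteq> v2" "v1 \<in> sverts H" "v2 \<in> sverts H"
        using sg_pair_ne[OF assms(3) A(2)] by auto
      have ne': "g v1 \<noteq> g v2"
        using sg_pair_ne[OF assms(4) gE[OF A(2)]] by auto
      have Fe: "F ` e = {(f u, g v1), (f u, g v2)}" using A(3) by (simp add: F_def)
      have "F ` e \<in> sedges (sg_prod G' H')"
        unfolding sedges_prod Fe using fV A(1) gE[OF A(2)] by blast
      moreover have "ssig (sg_prod G' H') (F ` e) = ssig H' {g v1, g v2}"
        unfolding ssig_prod Fe by simp
      moreover have "ssig (sg_prod G H) e = ssig H {v1, v2}"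
        unfolding ssig_prod A(3) by simp
      moreover have "(card (e \<inter> Z) = 1) = (card ({v1, v2} \<inter> Y) = 1)"
        proof -
        have "(card (e \<inter> Z) = 1) = (((u, v1) \<in> Z) \<noteq> ((u, v2) \<in> Z))"
          unfolding A(3) by (rule card_pair_inter1) (use ne in simp)
        also have "\<dots> = ((v1 \<in> Y) \<noteq> (v2 \<in> Y))"
          using ne A(1) unfolding Z_def by blast
        also have "\<dots> = (card ({v1, v2} \<inter> Y) = 1)"
          by (rule card_pair_inter1[OF ne(1), symmetric])
        finally show ?thesis .
      qed
      ultimately show ?thesis
        using gS[OF A(2)] Y(2)[OF A(2)] by (simp add: switch_def)
    next
      case B
      have ne: "u1 \<noteq> u2" "u1 \<in> sverts G" "u2 \<in> sverts G"
        using sg_pair_ne[OF assms(1) B(2)] by auto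
      have ne': "f u1 \<noteq> f u2"
        using sg_pair_ne[OF assms(2) fE[OF B(2)]] by auto
      have Fe: "F ` e = {(f u1, g v), (f u2, g v)}" using B(3) by (simp add: F_def)
      have "F ` e \<in> sedges (sg_prod G' H')"
        unfolding sedges_prod Fe using gV B(1) fE[OF B(2)] by blast
      moreover have "ssig (sg_prod G' H') (F ` e) = ssig G' {f u1, f u2}"
        unfolding ssig_prod Fe using ne' by (simp add: image_insert)
      moreover have "ssig (sg_prod G H) e = ssig G {u1, u2}"
        unfolding ssig_prod B(3) using ne by (simp add: image_insert)
      moreover have "(card (e \<inter> Z) = 1) = (card ({u1, u2} \<inter> X) = 1)"
        proof -
        have "(card (e \<inter> Z) = 1) = (((u1, v) \<in> Z) \<noteq> ((u2, v) \<in> Z))"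
          unfolding B(3) by (rule card_pair_inter1) (use ne in simp)
        also have "\<dots> = ((u1 \<in> X) \<noteq> (u2 \<in> X))"
          using ne B(1) unfolding Z_def by blast
        also have "\<dots> = (card ({u1, u2} \<inter> X) = 1)"
          by (rule card_pair_inter1[OF ne(1), symmetric])
        finally show ?thesis .
      qed
      ultimately show ?thesis
        using fS[OF B(2)] X(2)[OF B(2)] by (simp add: switch_def)
    qed
  qed
  have "is_sg_hom F (sg_prod G H) (sg_prod G' H')"
    unfolding is_sg_hom_def
  proof (intro conjI exI[of _ "switch Z (ssig (sg_prod G H))"])
    show "F ` sverts (sg_prod G H) \<subseteq> sverts (sg_prod G' H')"
      using fV gV by (auto simp: sverts_prod F_def)
    show "\<forall>u v. {u, v} \<in> sedges (sg_prod G H) \<longrightarrow> {F u, F v} \<in> sedges (sg_prod G' H')"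
    proof (intro allI impI)
      fix u v assume "{u, v} \<in> sedges (sg_prod G H)"
      from key[OF this] show "{F u, F v} \<in> sedges (sg_prod G' H')" by simp
    qed
    show "sig_equiv (sverts (sg_prod G H)) (sedges (sg_prod G H)) (ssig (sg_prod G H))
            (switch Z (ssig (sg_prod G H)))"
      unfolding sig_equiv_def sverts_prod by (rule exI[of _ Z]) (simp add: Z_def subset_iff)
    show "\<forall>u v. {u, v} \<in> sedges (sg_prod G H) \<longrightarrow>
            ssig (sg_prod G' H') {F u, F v} = switch Z (ssig (sg_prod G H)) {u, v}"
    proof (intro allI impI)
      fix u v assume "{u, v} \<in> sedges (sg_prod G H)"
      from key[OF this] show "ssig (sg_prod G' H') {F u, F v} = switch Z (ssig (sg_prod G H)) {u, v}" by simp
    qed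
  qed
  then show ?thesis unfolding sg_hom_exists_def by blast
qed

end
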